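(* Let $d\ge 3$ and write $\mathbb{C}^d=\mathcal{H}_3\oplus\mathcal{H}_{d-3}$ with $\mathcal{H}_3=\mathbb{C}^3$. Let $\lambda_1,\dots,\lambda_8$ be the Gell-Mann matrices, $\lambda_1=\begin{pmatrix}0&1&0\\1&0&0\\0&0&0\end{pmatrix}$, $\lambda_2=\begin{pmatrix}0&-i&0\\i&0&0\\0&0&0\end{pmatrix}$, $\lambda_4=\begin{pmatrix}0&0&1\\0&0&0\\1&0&0\end{pmatrix}$, $\lambda_5=\begin{pmatrix}0&0&-i\\0&0&0\\i&0&0\end{pmatrix}$. Let $H=\lambda_5\oplus 0_{d-3}$ and $L_i=\lambda_i\oplus 0_{d-3}$ for $i\in\{1,2,4\}$, where $0_{d-3}$ is the zero operator on $\mathcal{H}_{d-3}$. Then $H\notin\mathfrak{S}$, but there exist no orthonormal vectors $|0_L\rangle,|1_L\rangle\in\mathbb{C}^d$ such that, with $P=|0_L\rangle\langle0_L|+|1_L\rangle\langle1_L|$, one has $PSP\in\mathbb{R}P$ for all $S\in\mathfrak{S}$ and $PHP\not\propto P$. This holds for every $d\ge 3$, however large.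
   Context: For operators $L_1,\dots,L_n$ on $\mathbb{C}^d$, the Lindblad span $\mathfrak{S}$ is the real vector space of Hermitian operators spanned by $I$, $L_i+L_i^\dagger$, $i(L_i-L_i^\dagger)$, $L_i^\dagger L_j+L_j^\dagger L_i$ and $i(L_i^\dagger L_j-L_j^\dagger L_i)$ for all $i,j$. *)

theory Defs
  imports Complex_Main "Jordan_Normal_Form.Matrix"
begin

definition adj :: "complex mat \<Rightarrow> complex mat" where
  "adj A = mat (dim_col A) (dim_row A) (\<lambda>(i,j). cnj (A $$ (j,i)))"

definition lindblad_gens :: "nat \<Rightarrow> complex mat list \<Rightarrow> complex mat set" where
  "lindblad_gens d Ls =
     {1\<^sub>m d}
     \<union> {L + adj L | L. L \<in> set Ls}
     \<union> {\<i> \<cdot>\<^sub>m (L - adj L) | L. L \<in> set Ls}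
     \<union> {adj L * M + adj M * L | L M. L \<in> set Ls \<and> M \<in> set Ls}
     \<union> {\<i> \<cdot>\<^sub>m (adj L * M - adj M * L) | L M. L \<in> set Ls \<and> M \<in> set Ls}"

inductive_set real_span_mat :: "nat \<Rightarrow> complex mat set \<Rightarrow> complex mat set"
  for d :: nat and G :: "complex mat set" where
  zero: "0\<^sub>m d d \<in> real_span_mat d G"
| gen: "A \<in> G \<Longrightarrow> A \<in> real_span_mat d G"
| add: "A \<in> real_span_mat d G \<Longrightarrow> B \<in> real_span_mat d G \<Longrightarrow> A + B \<in> real_span_mat d G"
| smult: "A \<in> real_span_mat d G \<Longrightarrow> complex_of_real r \<cdot>\<^sub>m A \<in> real_span_mat d G"

definition lindblad_span :: "nat \<Rightarrow> complex mat list \<Rightarrow> complex mat set" where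
  "lindblad_span d Ls = real_span_mat d (lindblad_gens d Ls)"

(* A \<oplus> 0_{d-3} for a 3x3 matrix A, as a d x d matrix *)
definition embed3 :: "nat \<Rightarrow> complex mat \<Rightarrow> complex mat" where
  "embed3 d A = mat d d (\<lambda>(i,j). if i < 3 \<and> j < 3 then A $$ (i,j) else 0)"

definition gm1 :: "complex mat" where
  "gm1 = mat_of_rows_list 3 [[0,1,0],[1,0,0],[0,0,0]]"
definition gm2 :: "complex mat" where
  "gm2 = mat_of_rows_list 3 [[0,-\<i>,0],[\<i>,0,0],[0,0,0]]"
definition gm4 :: "complex mat" where
  "gm4 = mat_of_rows_list 3 [[0,0,1],[0,0,0],[1,0,0]]"
definition gm5 :: "complex mat" where
  "gm5 = mat_of_rows_list 3 [[0,0,-\<i>],[0,0,0],[\<i>,0,0]]"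

(* standard inner product <v|w> on C^d, antilinear in the first argument *)
definition cinner :: "complex vec \<Rightarrow> complex vec \<Rightarrow> complex" where
  "cinner v w = (\<Sum>i<dim_vec v. cnj (v $ i) * w $ i)"

definition ket_bra :: "complex vec \<Rightarrow> complex mat" where
  "ket_bra v = mat (dim_vec v) (dim_vec v) (\<lambda>(i,j). v $ i * cnj (v $ j))"

end

theory Submission
  imports Defs
begin


lemma embed3_carrier[simp]: "embed3 d A \<in> carrier_mat d d"
  by (simp add: embed3_def)
lemma embed3_dims[simp]: "dim_row (embed3 d A) = d" "dim_col (embed3 d A) = d"
  by (simp_all add: embed3_def)
lemma embed3_index: "i<d \<Longrightarrow> j<d \<Longrightarrow> embed3 d A $$ (i,j) = (if i<3\<and>j<3 then A$$(i,j) else 0)"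
  by (simp add: embed3_def)

lemma sum_split3: assumes "d \<ge> 3" shows "(\<Sum>l<(d::nat). f l) = (\<Sum>l<3. f l) + (\<Sum>l\<in>{3..<d}. f l)"
proof -
  have "sum f {..<d} = sum f ({..<3} \<union> {3..<d})"
    by (rule arg_cong[where f="sum f"]) (use assms in auto)
  also have "\<dots> = sum f {..<3} + sum f {3..<d}"
    by (rule sum.union_disjoint) auto
  finally show ?thesis .
qed

lemma embed3_mult: assumes "A \<in> carrier_mat 3 3" "B \<in> carrier_mat 3 3" "d \<ge> 3"
  shows "embed3 d A * embed3 d B = embed3 d (A*B)"
proof (rule eq_matI)
  fix i j assume ij: "i < dim_row (embed3 d (A*B))" "j < dim_col (embed3 d (A*B))"
  have "(embed3 d A * embed3 d B) $$ (i,j) = (\<Sum>l<d. embed3 d A $$ (i,l) * embed3 d B $$ (l,j))"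
    using ij by (simp add: scalar_prod_def row_def col_def atLeast0LessThan)
  also have "\<dots> = (\<Sum>l<3. embed3 d A $$ (i,l) * embed3 d B $$ (l,j))"
    using ij assms(3) by (subst sum_split3[OF assms(3)]) (simp add: embed3_index)
  also have "\<dots> = embed3 d (A*B) $$ (i,j)"
    using ij assms by (auto simp: embed3_index scalar_prod_def row_def col_def atLeast0LessThan)
  finally show "(embed3 d A * embed3 d B) $$ (i,j) = embed3 d (A*B) $$ (i,j)" .
qed auto

lemma embed3_adj: assumes "A \<in> carrier_mat 3 3"
  shows "adj (embed3 d A) = embed3 d (adj A)"
  using assms by (auto simp: adj_def embed3_def intro!: eq_matI)

lemma embed3_add: assumes "A \<in> carrier_mat 3 3" "B \<in> carrier_mat 3 3"
  shows "embed3 d A + embed3 d B = embed3 d (A+B)"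
  using assms by (auto simp: embed3_def intro!: eq_matI)
lemma embed3_minus: assumes "A \<in> carrier_mat 3 3" "B \<in> carrier_mat 3 3"
  shows "embed3 d A - embed3 d B = embed3 d (A-B)"
  using assms by (auto simp: embed3_def intro!: eq_matI)
lemma embed3_smult: "A \<in> carrier_mat 3 3 \<Longrightarrow> c \<cdot>\<^sub>m embed3 d A = embed3 d (c \<cdot>\<^sub>m A)"
  by (auto simp: embed3_def intro!: eq_matI)

lemma gm_dims[simp]: "dim_row gm1 = 3" "dim_col gm1 = 3" "dim_row gm2 = 3" "dim_col gm2 = 3"
 "dim_row gm4 = 3" "dim_col gm4 = 3" "dim_row gm5 = 3" "dim_col gm5 = 3"
  by (simp_all add: gm1_def gm2_def gm4_def gm5_def mat_of_rows_list_def)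
lemma gm_carrier[simp]: "gm1 \<in> carrier_mat 3 3" "gm2 \<in> carrier_mat 3 3" "gm4 \<in> carrier_mat 3 3" "gm5 \<in> carrier_mat 3 3"
  by (rule carrier_matI; simp)+

lemma adj_carrier[simp]: "A \<in> carrier_mat n m \<Longrightarrow> adj A \<in> carrier_mat m n"
  by (simp add: adj_def)



lemma adjmult_carrier[simp]: "A \<in> carrier_mat 3 3 \<Longrightarrow> B \<in> carrier_mat 3 3 \<Longrightarrow> adj A * B \<in> carrier_mat 3 3"
  by (metis adj_carrier mult_carrier_mat)

lemma less3: "(i::nat) < 3 \<longleftrightarrow> i = 0 \<or> i = 1 \<or> i = 2" by auto

lemma mult3: "A \<in> carrier_mat 3 3 \<Longrightarrow> B \<in> carrier_mat 3 3 \<Longrightarrow> i < 3 \<Longrightarrow> j < 3 \<Longrightarrow>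
  (A*B) $$ (i,j) = A$$(i,0)*B$$(0,j) + A$$(i,1)*B$$(1,j) + A$$(i,2)*B$$(2,j)"
  by (simp add: scalar_prod_def row_def col_def numeral_3_eq_3 numeral_2_eq_2)

lemma adj_index: "i < dim_col A \<Longrightarrow> j < dim_row A \<Longrightarrow> adj A $$ (i,j) = cnj (A $$ (j,i))"
  by (simp add: adj_def)

lemma gm1_index: "gm1 $$ (i,j) = (if (i=0\<and>j=1) \<or> (i=1\<and>j=0) then 1 else 0)" if "i<3" "j<3"
  using that unfolding less3 by (auto simp: gm1_def mat_of_rows_list_def)
lemma gm2_index: "gm2 $$ (i,j) = (if (i=0\<and>j=1) then -\<i> else if (i=1\<and>j=0) then \<i> else 0)" if "i<3" "j<3"
  using that unfolding less3 by (auto simp: gm2_def mat_of_rows_list_def)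
lemma gm4_index: "gm4 $$ (i,j) = (if (i=0\<and>j=2) \<or> (i=2\<and>j=0) then 1 else 0)" if "i<3" "j<3"
  using that unfolding less3 by (auto simp: gm4_def mat_of_rows_list_def)
lemma gm5_index: "gm5 $$ (i,j) = (if (i=0\<and>j=2) then -\<i> else if (i=2\<and>j=0) then \<i> else 0)" if "i<3" "j<3"
  using that unfolding less3 by (auto simp: gm5_def mat_of_rows_list_def)

lemma adj_dims[simp]: "dim_row (adj A) = dim_col A" "dim_col (adj A) = dim_row A"
  by (simp_all add: adj_def)

lemmas gm_simps = gm1_index gm2_index gm4_index gm5_index mult3 adj_index


lemma im02: "A \<in> {gm1,gm2,gm4} \<Longrightarrow> B \<in> {gm1,gm2,gm4} \<Longrightarrow>
   Im ((A + adj A)$$(0,2)) = 0 \<and> Im ((\<i> \<cdot>\<^sub>m (A - adj A))$$(0,2)) = 0 \<and>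
   Im ((adj A * B + adj B * A)$$(0,2)) = 0 \<and> Im ((\<i> \<cdot>\<^sub>m (adj A * B - adj B * A))$$(0,2)) = 0"
  by (elim insertE emptyE; simp add: gm_simps del: index_mult_mat(1))

lemma gm_in_carrier: "A \<in> {gm1,gm2,gm4} \<Longrightarrow> A \<in> carrier_mat 3 3" by auto

lemma gens_prop:
  assumes d: "d \<ge> 3" and G: "G \<in> lindblad_gens d [embed3 d gm1, embed3 d gm2, embed3 d gm4]"
  shows "G \<in> carrier_mat d d \<and> Im (G $$ (0,2)) = 0"
proof -
  have e02: "embed3 d X $$ (0,2) = X $$ (0,2)" for X using d by (simp add: embed3_index)
  have Ls: "L \<in> set [embed3 d gm1, embed3 d gm2, embed3 d gm4] \<Longrightarrow> \<exists>A. L = embed3 d A \<and> A \<in> {gm1,gm2,gm4}" for L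
    by auto
  from G consider "G = 1\<^sub>m d"
    | L where "L \<in> set [embed3 d gm1, embed3 d gm2, embed3 d gm4]" "G = L + adj L"
    | L where "L \<in> set [embed3 d gm1, embed3 d gm2, embed3 d gm4]" "G = \<i> \<cdot>\<^sub>m (L - adj L)"
    | L M where "L \<in> set [embed3 d gm1, embed3 d gm2, embed3 d gm4]" "M \<in> set [embed3 d gm1, embed3 d gm2, embed3 d gm4]" "G = adj L * M + adj M * L"
    | L M where "L \<in> set [embed3 d gm1, embed3 d gm2, embed3 d gm4]" "M \<in> set [embed3 d gm1, embed3 d gm2, embed3 d gm4]" "G = \<i> \<cdot>\<^sub>m (adj L * M - adj M * L)"
    unfolding lindblad_gens_def by blast
  then show ?thesis
  proof cases
    case 1 then show ?thesis using d by simp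
  next
    case (2 L)
    then obtain A where A: "L = embed3 d A" "A \<in> {gm1,gm2,gm4}" using Ls by blast
    have c: "A \<in> carrier_mat 3 3" using A(2) by auto
    have "G = embed3 d (A + adj A)" using 2 A c by (simp add: embed3_adj embed3_add)
    then show ?thesis using im02[OF A(2) A(2)] e02 by simp
  next
    case (3 L)
    then obtain A where A: "L = embed3 d A" "A \<in> {gm1,gm2,gm4}" using Ls by blast
    have c: "A \<in> carrier_mat 3 3" using A(2) by auto
    have c2: "A - adj A \<in> carrier_mat 3 3" using c by auto
    have "G = embed3 d (\<i> \<cdot>\<^sub>m (A - adj A))" using 3 A c c2 by (simp add: embed3_adj embed3_minus embed3_smult)
    then show ?thesis using im02[OF A(2) A(2)] e02 by simp
  next
    case (4 L M)
    then obtain A B where A: "L = embed3 d A" "A \<in> {gm1,gm2,gm4}" "M = embed3 d B" "B \<in> {gm1,gm2,gm4}" using Ls by metis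
    have c: "A \<in> carrier_mat 3 3" "B \<in> carrier_mat 3 3" using A by auto
    have c3: "adj A * B \<in> carrier_mat 3 3" "adj B * A \<in> carrier_mat 3 3" using c by auto
    have "G = embed3 d (adj A * B + adj B * A)" using 4 A c c3 d
      by (simp add: embed3_adj embed3_add embed3_mult)
    then show ?thesis using im02[OF A(2) A(4)] e02 by simp
  next
    case (5 L M)
    then obtain A B where A: "L = embed3 d A" "A \<in> {gm1,gm2,gm4}" "M = embed3 d B" "B \<in> {gm1,gm2,gm4}" using Ls by metis
    have c: "A \<in> carrier_mat 3 3" "B \<in> carrier_mat 3 3" using A by auto
    have c2: "adj A * B - adj B * A \<in> carrier_mat 3 3" using c by auto
    have "G = embed3 d (\<i> \<cdot>\<^sub>m (adj A * B - adj B * A))" using 5 A c c2 d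
      by (simp add: embed3_adj embed3_minus embed3_mult embed3_smult)
    then show ?thesis using im02[OF A(2) A(4)] e02 by simp
  qed
qed

lemma span_prop:
  assumes d: "d \<ge> 3" and S: "S \<in> lindblad_span d [embed3 d gm1, embed3 d gm2, embed3 d gm4]"
  shows "S \<in> carrier_mat d d \<and> Im (S $$ (0,2)) = 0"
  using S unfolding lindblad_span_def
proof (induction rule: real_span_mat.induct)
  case zero then show ?case using d by simp
next
  case (gen A) then show ?case using gens_prop[OF d] by blast
next
  case (add A B)
  then have "A \<in> carrier_mat d d" "B \<in> carrier_mat d d" "Im (A$$(0,2)) = 0" "Im (B$$(0,2)) = 0" by auto
  moreover have "dim_row B = d" "dim_col B = d" using calculation(2) by auto
  ultimately show ?case using d by simp
next
  case (smult A r)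
  then have "A \<in> carrier_mat d d" "Im (A$$(0,2)) = 0" by auto
  moreover have "dim_row A = d" "dim_col A = d" using calculation(1) by auto
  ultimately show ?case using d by simp
qed

lemma part1: assumes d: "d \<ge> 3"
  shows "embed3 d gm5 \<notin> lindblad_span d [embed3 d gm1, embed3 d gm2, embed3 d gm4]"
proof
  assume "embed3 d gm5 \<in> lindblad_span d [embed3 d gm1, embed3 d gm2, embed3 d gm4]"
  from span_prop[OF d this] have "Im (embed3 d gm5 $$ (0,2)) = 0" by blast
  moreover have "embed3 d gm5 $$ (0,2) = -\<i>" using d by (simp add: embed3_index gm5_index)
  ultimately show False by simp
qed



definition E3 :: "nat \<Rightarrow> complex mat" where
  "E3 k = mat 3 3 (\<lambda>(i,j). if i = k \<and> j = k then 1 else 0)"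

lemma E3_carrier[simp]: "E3 k \<in> carrier_mat 3 3" by (simp add: E3_def)

lemma E3_span:
  assumes d: "d \<ge> 3" and k: "k < 3"
  shows "embed3 d (E3 k) \<in> lindblad_span d [embed3 d gm1, embed3 d gm2, embed3 d gm4]"
proof -
  let ?Ls = "[embed3 d gm1, embed3 d gm2, embed3 d gm4]"
  let ?L1 = "embed3 d gm1" and ?L2 = "embed3 d gm2" and ?L4 = "embed3 d gm4"
  define G1 where "G1 = adj ?L1 * ?L1 + adj ?L1 * ?L1"
  define G2 where "G2 = \<i> \<cdot>\<^sub>m (adj ?L1 * ?L2 - adj ?L2 * ?L1)"
  define G4 where "G4 = adj ?L4 * ?L4 + adj ?L4 * ?L4"
  have g: "G1 \<in> lindblad_gens d ?Ls" "G2 \<in> lindblad_gens d ?Ls" "G4 \<in> lindblad_gens d ?Ls"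
    unfolding lindblad_gens_def G1_def G2_def G4_def by auto
  have comb: "complex_of_real a \<cdot>\<^sub>m G1 + complex_of_real b \<cdot>\<^sub>m G2 + complex_of_real c \<cdot>\<^sub>m G4
     \<in> lindblad_span d ?Ls" for a b c
    unfolding lindblad_span_def using g by (intro real_span_mat.add real_span_mat.smult real_span_mat.gen)
  have G1e: "G1 = embed3 d (adj gm1 * gm1 + adj gm1 * gm1)"
    unfolding G1_def using d by (simp add: embed3_adj embed3_mult embed3_add)
  have c2: "adj gm1 * gm2 - adj gm2 * gm1 \<in> carrier_mat 3 3" by auto
  have G2e: "G2 = embed3 d (\<i> \<cdot>\<^sub>m (adj gm1 * gm2 - adj gm2 * gm1))"
    unfolding G2_def using d c2 by (simp add: embed3_adj embed3_mult embed3_minus embed3_smult)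
  have G4e: "G4 = embed3 d (adj gm4 * gm4 + adj gm4 * gm4)"
    unfolding G4_def using d by (simp add: embed3_adj embed3_mult embed3_add)
  have key: "complex_of_real a \<cdot>\<^sub>m G1 + complex_of_real b \<cdot>\<^sub>m G2 + complex_of_real c \<cdot>\<^sub>m G4
     = embed3 d (complex_of_real a \<cdot>\<^sub>m (adj gm1 * gm1 + adj gm1 * gm1)
        + complex_of_real b \<cdot>\<^sub>m (\<i> \<cdot>\<^sub>m (adj gm1 * gm2 - adj gm2 * gm1))
        + complex_of_real c \<cdot>\<^sub>m (adj gm4 * gm4 + adj gm4 * gm4))" for a b c
  proof -
    have cs: "adj gm1 * gm1 + adj gm1 * gm1 \<in> carrier_mat 3 3"
      "\<i> \<cdot>\<^sub>m (adj gm1 * gm2 - adj gm2 * gm1) \<in> carrier_mat 3 3"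
      "adj gm4 * gm4 + adj gm4 * gm4 \<in> carrier_mat 3 3" by auto
    then show ?thesis unfolding G1e G2e G4e
      by (simp add: embed3_smult embed3_add)
  qed
  from k consider "k = 0" | "k = 1" | "k = 2" by linarith
  then show ?thesis
  proof cases
    case 1
    have "E3 k = complex_of_real (1/4) \<cdot>\<^sub>m (adj gm1 * gm1 + adj gm1 * gm1)
        + complex_of_real (-1/4) \<cdot>\<^sub>m (\<i> \<cdot>\<^sub>m (adj gm1 * gm2 - adj gm2 * gm1))
        + complex_of_real 0 \<cdot>\<^sub>m (adj gm4 * gm4 + adj gm4 * gm4)"
      unfolding 1 apply (rule eq_matI)
        apply (simp only: dim_row_mat E3_def index_add_mat index_smult_mat)
        apply (simp add: less3 del: index_mult_mat(1))
        apply (elim disjE; simp add: E3_def gm_simps complex_eq_iff del: index_mult_mat(1))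
       by (simp_all add: E3_def)
    then show ?thesis using comb key by metis
  next
    case 2
    have "E3 k = complex_of_real (1/4) \<cdot>\<^sub>m (adj gm1 * gm1 + adj gm1 * gm1)
        + complex_of_real (1/4) \<cdot>\<^sub>m (\<i> \<cdot>\<^sub>m (adj gm1 * gm2 - adj gm2 * gm1))
        + complex_of_real 0 \<cdot>\<^sub>m (adj gm4 * gm4 + adj gm4 * gm4)"
      unfolding 2 apply (rule eq_matI)
        apply (simp only: dim_row_mat E3_def index_add_mat index_smult_mat)
        apply (simp add: less3 del: index_mult_mat(1))
        apply (elim disjE; simp add: E3_def gm_simps complex_eq_iff del: index_mult_mat(1))
       by (simp_all add: E3_def)
    then show ?thesis using comb key by metis
  next
    case 3
    have "E3 k = complex_of_real (-1/4) \<cdot>\<^sub>m (adj gm1 * gm1 + adj gm1 * gm1)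
        + complex_of_real (1/4) \<cdot>\<^sub>m (\<i> \<cdot>\<^sub>m (adj gm1 * gm2 - adj gm2 * gm1))
        + complex_of_real (1/2) \<cdot>\<^sub>m (adj gm4 * gm4 + adj gm4 * gm4)"
      unfolding 3 apply (rule eq_matI)
        apply (simp only: dim_row_mat E3_def index_add_mat index_smult_mat)
        apply (simp add: less3 del: index_mult_mat(1))
        apply (elim disjE; simp add: E3_def gm_simps complex_eq_iff del: index_mult_mat(1))
       by (simp_all add: E3_def)
    then show ?thesis using comb key by metis
  qed
qed



lemma cinner_add: "dim_vec x = dim_vec u \<Longrightarrow> dim_vec y = dim_vec u \<Longrightarrow>
  cinner u (x + y) = cinner u x + cinner u y"
  by (simp add: cinner_def algebra_simps sum.distrib)

lemma cinner_smult: "dim_vec x = dim_vec u \<Longrightarrow> cinner u (c \<cdot>\<^sub>v x) = c * cinner u x"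
  by (simp add: cinner_def sum_distrib_left algebra_simps)

lemma cinner_cnj: "dim_vec u = dim_vec v \<Longrightarrow> cinner v u = cnj (cinner u v)"
  by (simp add: cinner_def mult.commute)

lemma ket_bra_carrier[simp]: "ket_bra v \<in> carrier_mat (dim_vec v) (dim_vec v)"
  by (simp add: ket_bra_def)

lemma ket_bra_mult: "dim_vec w = dim_vec v \<Longrightarrow> ket_bra v *\<^sub>v w = cinner v w \<cdot>\<^sub>v v"
  by (rule eq_vecI) (auto simp: ket_bra_def cinner_def scalar_prod_def sum_distrib_left
      atLeast0LessThan algebra_simps intro!: sum.cong)

lemma smult_mat_vec: "A \<in> carrier_mat nr nc \<Longrightarrow> v \<in> carrier_vec nc \<Longrightarrow> (c \<cdot>\<^sub>m A) *\<^sub>v v = c \<cdot>\<^sub>v (A *\<^sub>v v)"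
  by (rule eq_vecI) (auto simp: scalar_prod_def sum_distrib_left algebra_simps)

lemma E3_embed_index: "k < 3 \<Longrightarrow> i < d \<Longrightarrow> j < d \<Longrightarrow>
   embed3 d (E3 k) $$ (i,j) = (if i = k \<and> j = k then 1 else 0)"
  by (auto simp: embed3_index E3_def)

lemma E3_cinner:
  assumes k: "k < 3" "k < d" and u: "u \<in> carrier_vec d" and w: "w \<in> carrier_vec d"
  shows "cinner u (embed3 d (E3 k) *\<^sub>v w) = cnj (u $ k) * w $ k"
proof -
  have e: "(embed3 d (E3 k) *\<^sub>v w) $ i = (if i = k then w $ k else 0)" if i: "i < d" for i
  proof -
    have "(embed3 d (E3 k) *\<^sub>v w) $ i = (\<Sum>j<d. embed3 d (E3 k) $$ (i,j) * w $ j)"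
      using i w by (simp add: scalar_prod_def atLeast0LessThan)
    also have "\<dots> = (\<Sum>j<d. if j = k then (if i = k then w $ k else 0) else 0)"
      using i k by (intro sum.cong) (auto simp: E3_embed_index)
    also have "\<dots> = (if i = k then w $ k else 0)" using k by simp
    finally show ?thesis .
  qed
  have "cinner u (embed3 d (E3 k) *\<^sub>v w) = (\<Sum>i<d. if i = k then cnj (u $ k) * w $ k else 0)"
    unfolding cinner_def using u by (intro sum.cong) (auto simp: e carrier_vecD simp del: index_mult_mat_vec)
  also have "\<dots> = cnj (u $ k) * w $ k" using k by simp
  finally show ?thesis .
qed

lemma part2:
  assumes d: "d \<ge> 3" and v0: "v0 \<in> carrier_vec d" and v1: "v1 \<in> carrier_vec d"
    and n0: "cinner v0 v0 = 1" and n1: "cinner v1 v1 = 1" and o: "cinner v0 v1 = 0"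
    and P: "P = ket_bra v0 + ket_bra v1"
    and hS: "\<forall>S \<in> lindblad_span d [embed3 d gm1, embed3 d gm2, embed3 d gm4].
               \<exists>r::real. P * S * P = complex_of_real r \<cdot>\<^sub>m P"
  shows "\<exists>c::complex. P * embed3 d gm5 * P = c \<cdot>\<^sub>m P"
proof -
  have dv: "dim_vec v0 = d" "dim_vec v1 = d" using v0 v1 by auto
  have Pc: "P \<in> carrier_mat d d" using P dv ket_bra_carrier[of v0] ket_bra_carrier[of v1] by simp
  have o': "cinner v1 v0 = 0" using o cinner_cnj[of v0 v1] dv by simp
  have Pv: "P *\<^sub>v x = cinner v0 x \<cdot>\<^sub>v v0 + cinner v1 x \<cdot>\<^sub>v v1" if x: "x \<in> carrier_vec d" for x
  proof -
    have "P *\<^sub>v x = ket_bra v0 *\<^sub>v x + ket_bra v1 *\<^sub>v x"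
      unfolding P using x dv ket_bra_carrier[of v0] ket_bra_carrier[of v1]
      by (intro add_mult_distrib_mat_vec) auto
    then show ?thesis using x dv by (simp add: ket_bra_mult)
  qed
  have cP0: "cinner v0 (P *\<^sub>v x) = cinner v0 x" and cP1: "cinner v1 (P *\<^sub>v x) = cinner v1 x"
    if x: "x \<in> carrier_vec d" for x
    using x dv by (simp_all add: Pv cinner_add cinner_smult n0 n1 o o')
  have Pv0: "P *\<^sub>v v0 = v0" using Pv[OF v0] n0 o' v0 v1 by (intro eq_vecI) auto
  have Pv1: "P *\<^sub>v v1 = v1" using Pv[OF v1] n1 o v1 v0 by (intro eq_vecI) auto
  have key: "cinner v0 (S *\<^sub>v v0) = r \<and> cinner v1 (S *\<^sub>v v1) = r \<and> cinner v0 (S *\<^sub>v v1) = 0"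
    if S: "S \<in> carrier_mat d d" and eq: "P * S * P = complex_of_real r \<cdot>\<^sub>m P" for S r
  proof -
    have m: "(P * S * P) *\<^sub>v x = P *\<^sub>v (S *\<^sub>v (P *\<^sub>v x))" if "x \<in> carrier_vec d" for x
      using that S Pc by (metis assoc_mult_mat_vec mult_carrier_mat mult_mat_vec_carrier)
    have a: "cinner u ((P * S * P) *\<^sub>v w) = r * cinner u (P *\<^sub>v w)"
      if "u \<in> carrier_vec d" "w \<in> carrier_vec d" for u w
      using that Pc by (simp add: eq smult_mat_vec[OF Pc] cinner_smult del: assoc_mult_mat)
    have s0: "S *\<^sub>v v0 \<in> carrier_vec d" "S *\<^sub>v v1 \<in> carrier_vec d" using S v0 v1 by auto
    have "cinner v0 (S *\<^sub>v v0) = r"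
      using a[OF v0 v0] m[OF v0] Pv0 cP0[OF s0(1)] n0 by simp
    moreover have "cinner v1 (S *\<^sub>v v1) = r"
      using a[OF v1 v1] m[OF v1] Pv1 cP1[OF s0(2)] n1 by simp
    moreover have "cinner v0 (S *\<^sub>v v1) = 0"
      using a[OF v0 v1] m[OF v1] Pv1 cP0[OF s0(2)] o by simp
    ultimately show ?thesis by blast
  qed
  have zero: "v0 $ k = 0 \<and> v1 $ k = 0" if k: "k < 3" for k
  proof -
    have kd: "k < d" using k d by simp
    obtain r :: real where r: "P * embed3 d (E3 k) * P = complex_of_real r \<cdot>\<^sub>m P"
      using hS E3_span[OF d k] by blast
    from key[OF embed3_carrier r] E3_cinner[OF k kd] v0 v1
    have h: "cnj (v0 $ k) * v0 $ k = r" "cnj (v1 $ k) * v1 $ k = r" "cnj (v0 $ k) * v1 $ k = 0"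
      by auto
    show ?thesis
    proof (cases "v0 $ k = 0")
      case True
      then have "r = 0" using h(1) by simp
      then have "cnj (v1 $ k) * v1 $ k = 0" using h(2) by simp
      then show ?thesis using True by simp
    next
      case False
      then have "v1 $ k = 0" using h(3) by simp
      then have "r = 0" using h(2) by simp
      then have "cnj (v0 $ k) * v0 $ k = 0" using h(1) by simp
      then show ?thesis using False by simp
    qed
  qed
  have HP: "embed3 d gm5 * P = 0\<^sub>m d d"
  proof (rule eq_matI)
    fix i j assume ij: "i < dim_row (0\<^sub>m d d :: complex mat)" "j < dim_col (0\<^sub>m d d :: complex mat)"
    have "(embed3 d gm5 * P) $$ (i,j) = (\<Sum>l<d. embed3 d gm5 $$ (i,l) * P $$ (l,j))"
      using ij Pc by (simp add: scalar_prod_def atLeast0LessThan)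
    also have "\<dots> = 0"
    proof (rule sum.neutral, rule ballI)
      fix l assume l: "l \<in> {..<d}"
      show "embed3 d gm5 $$ (i,l) * P $$ (l,j) = 0"
      proof (cases "l < 3")
        case True
        have "P $$ (l,j) = v0 $ l * cnj (v0 $ j) + v1 $ l * cnj (v1 $ j)"
          using l ij dv unfolding P by (simp add: ket_bra_def)
        then show ?thesis using zero[OF True] by simp
      next
        case False
        then show ?thesis using l ij by (simp add: embed3_index)
      qed
    qed
    finally show "(embed3 d gm5 * P) $$ (i,j) = 0\<^sub>m d d $$ (i,j)" using ij by simp
  qed (use Pc in auto)
  have "P * embed3 d gm5 * P = 0\<^sub>m d d"
    using Pc HP by (simp add: assoc_mult_mat[OF Pc embed3_carrier Pc])
  moreover have "0 \<cdot>\<^sub>m P = 0\<^sub>m d d" using Pc by (intro eq_matI) auto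
  ultimately show ?thesis by metis
qed


theorem mainTheorem2:
  fixes d :: nat
  assumes "d \<ge> 3"
  defines "H \<equiv> embed3 d gm5"
      and "Ls \<equiv> [embed3 d gm1, embed3 d gm2, embed3 d gm4]"
  shows "H \<notin> lindblad_span d Ls \<and>
    \<not> (\<exists>v0 v1. v0 \<in> carrier_vec d \<and> v1 \<in> carrier_vec d \<and>
          cinner v0 v0 = 1 \<and> cinner v1 v1 = 1 \<and> cinner v0 v1 = 0 \<and>
          (let P = ket_bra v0 + ket_bra v1 in
             (\<forall>S \<in> lindblad_span d Ls. \<exists>r::real. P * S * P = complex_of_real r \<cdot>\<^sub>m P) \<and>
             \<not> (\<exists>c::complex. P * H * P = c \<cdot>\<^sub>m P)))"
proof
  show "H \<notin> lindblad_span d Ls" unfolding H_def Ls_def using part1[OF assms(1)] .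
next
  show "\<not> (\<exists>v0 v1. v0 \<in> carrier_vec d \<and> v1 \<in> carrier_vec d \<and>
          cinner v0 v0 = 1 \<and> cinner v1 v1 = 1 \<and> cinner v0 v1 = 0 \<and>
          (let P = ket_bra v0 + ket_bra v1 in
             (\<forall>S \<in> lindblad_span d Ls. \<exists>r::real. P * S * P = complex_of_real r \<cdot>\<^sub>m P) \<and>
             \<not> (\<exists>c::complex. P * H * P = c \<cdot>\<^sub>m P)))"
  proof
    assume "\<exists>v0 v1. v0 \<in> carrier_vec d \<and> v1 \<in> carrier_vec d \<and>
          cinner v0 v0 = 1 \<and> cinner v1 v1 = 1 \<and> cinner v0 v1 = 0 \<and>
          (let P = ket_bra v0 + ket_bra v1 in
             (\<forall>S \<in> lindblad_span d Ls. \<exists>r::real. P * S * P = complex_of_real r \<cdot>\<^sub>m P) \<and>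
             \<not> (\<exists>c::complex. P * H * P = c \<cdot>\<^sub>m P))"
    then obtain v0 v1 where v: "v0 \<in> carrier_vec d" "v1 \<in> carrier_vec d"
       "cinner v0 v0 = 1" "cinner v1 v1 = 1" "cinner v0 v1 = 0"
       and hS: "\<forall>S \<in> lindblad_span d Ls. \<exists>r::real. (ket_bra v0 + ket_bra v1) * S * (ket_bra v0 + ket_bra v1) = complex_of_real r \<cdot>\<^sub>m (ket_bra v0 + ket_bra v1)"
       and hH: "\<not> (\<exists>c::complex. (ket_bra v0 + ket_bra v1) * H * (ket_bra v0 + ket_bra v1) = c \<cdot>\<^sub>m (ket_bra v0 + ket_bra v1))"
      unfolding Let_def by blast
    have "\<exists>c::complex. (ket_bra v0 + ket_bra v1) * embed3 d gm5 * (ket_bra v0 + ket_bra v1) = c \<cdot>\<^sub>m (ket_bra v0 + ket_bra v1)"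
      using part2[OF assms(1) v refl] hS unfolding Ls_def by blast
    then show False using hH unfolding H_def by blast
  qed
qed

end
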